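(* Suppose $\mathrm{char}(k)\ne 2$ ($k$ algebraically closed). Let $(V,q)$ be a non-degenerate quadratic space and let $(W,q')$ be a quadratic space of dimension at most $\aleph_0$. Then there is an embedding $W\to V$, i.e. a $k$-linear map $\phi:W\to V$ with $q\circ\phi=q'$.
   Context: A quadratic space is a $k$-vector space $V$ together with $q\in P_2(V)$, a degree-$2$ polynomial function on $V$ (in dual coordinates $x_i$ to a basis, a formal, possibly infinite, $k$-linear combination of degree-$2$ monomials). The strength of $q$ is the least $s$ with $q=\sum_{i=1}^s g_ih_i$ for linear forms $g_i,h_i\in P_1(V)$ ($\infty$ if none exists); $(V,q)$ is non-degenerate if $q$ has infinite strength. *)

theory Defs
  imports Main "HOL-Computational_Algebra.Polynomial" "HOL-Library.Extended_Nat"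
begin

definition alg_closed :: "'k::field itself \<Rightarrow> bool" where
  "alg_closed _ \<longleftrightarrow> (\<forall>p :: 'k poly. degree p > 0 \<longrightarrow> (\<exists>x. poly p x = 0))"

definition linear_form :: "('k::field \<Rightarrow> 'v::ab_group_add \<Rightarrow> 'v) \<Rightarrow> ('v \<Rightarrow> 'k) \<Rightarrow> bool" where
  "linear_form scale g \<longleftrightarrow> Vector_Spaces.linear scale ((*) :: 'k \<Rightarrow> 'k \<Rightarrow> 'k) g"

text \<open>Degree-2 polynomial functions P_2(V): q(v) = B(v,v) for a bilinear form B
  (equivalently, a formal possibly infinite linear combination of degree-2 monomials
  in dual coordinates to a basis).\<close>
definition is_P2 :: "('k::field \<Rightarrow> 'v::ab_group_add \<Rightarrow> 'v) \<Rightarrow> ('v \<Rightarrow> 'k) \<Rightarrow> bool" where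
  "is_P2 scale q \<longleftrightarrow> (\<exists>B :: 'v \<Rightarrow> 'v \<Rightarrow> 'k.
      (\<forall>w. linear_form scale (\<lambda>v. B v w)) \<and> (\<forall>v. linear_form scale (B v)) \<and>
      (\<forall>v. q v = B v v))"

definition quadratic_space :: "('k::field \<Rightarrow> 'v::ab_group_add \<Rightarrow> 'v) \<Rightarrow> ('v \<Rightarrow> 'k) \<Rightarrow> bool" where
  "quadratic_space scale q \<longleftrightarrow> vector_space scale \<and> is_P2 scale q"

definition strength_le :: "('k::field \<Rightarrow> 'v::ab_group_add \<Rightarrow> 'v) \<Rightarrow> ('v \<Rightarrow> 'k) \<Rightarrow> nat \<Rightarrow> bool" where
  "strength_le scale q s \<longleftrightarrow> (\<exists>g h :: nat \<Rightarrow> 'v \<Rightarrow> 'k.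
      (\<forall>i<s. linear_form scale (g i) \<and> linear_form scale (h i)) \<and>
      q = (\<lambda>v. \<Sum>i<s. g i v * h i v))"

definition strength :: "('k::field \<Rightarrow> 'v::ab_group_add \<Rightarrow> 'v) \<Rightarrow> ('v \<Rightarrow> 'k) \<Rightarrow> enat" where
  "strength scale q = (if \<exists>s. strength_le scale q s then enat (LEAST s. strength_le scale q s) else \<infinity>)"

definition nondegenerate :: "('k::field \<Rightarrow> 'v::ab_group_add \<Rightarrow> 'v) \<Rightarrow> ('v \<Rightarrow> 'k) \<Rightarrow> bool" where
  "nondegenerate scale q \<longleftrightarrow> strength scale q = \<infinity>"

definition dim_le_aleph0 :: "('k::field \<Rightarrow> 'v::ab_group_add \<Rightarrow> 'v) \<Rightarrow> bool" where
  "dim_le_aleph0 scale \<longleftrightarrow> (\<exists>B. countable B \<and> \<not> module.dependent scale B \<and> module.span scale B = UNIV)"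

end

theory Submission
  imports Defs
begin

lemma build_seq:
  assumes G0: "G 0 f0" and step: "\<And>n f. G n f \<Longrightarrow> \<exists>x. G (Suc n) (f(n:=x))"
    and cong: "\<And>n f g. (\<And>i. i<n \<Longrightarrow> f i = g i) \<Longrightarrow> G n f \<Longrightarrow> G n g"
  shows "\<exists>f. \<forall>n. G n f"
proof -
  define S where "S = rec_nat f0 (\<lambda>n f. f(n := SOME x. G (Suc n) (f(n:=x))))"
  have S0: "S 0 = f0" and SS: "S (Suc n) = (S n)(n := SOME x. G (Suc n) ((S n)(n:=x)))" for n
    by (simp_all add: S_def)
  have GS: "G n (S n)" for n
  proof (induction n)
    case 0 then show ?case using G0 S0 by simp
  next
    case (Suc n)
    show ?case unfolding SS by (rule someI_ex) (rule step[OF Suc])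
  qed
  have stab: "S n i = S (Suc i) i" if "i < n" for i n
    using that
  proof (induction n)
    case 0 then show ?case by simp
  next
    case (Suc n)
    show ?case
    proof (cases "i = n")
      case True then show ?thesis by simp
    next
      case False
      with Suc.prems have "i < n" by simp
      have "S (Suc n) i = S n i" unfolding SS using False by simp
      also have "\<dots> = S (Suc i) i" by (rule Suc.IH[OF \<open>i < n\<close>])
      finally show ?thesis .
    qed
  qed
  have "G n (\<lambda>i. S (Suc i) i)" for n by (rule cong[OF _ GS]) (erule stab)
  then show ?thesis by blast
qed

primrec proj :: "('k::field \<Rightarrow> 'v::ab_group_add \<Rightarrow> 'v) \<Rightarrow> ('v\<Rightarrow>'v\<Rightarrow>'k) \<Rightarrow> (nat \<Rightarrow> 'v) \<Rightarrow> nat \<Rightarrow> 'v \<Rightarrow> 'v" where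
  "proj sc b e 0 x = x"
| "proj sc b e (Suc n) x = proj sc b e n x - sc (b (e n) x) (e n)"

locale sbf = vector_space scale for scale :: "'k::field \<Rightarrow> 'v::ab_group_add \<Rightarrow> 'v" (infixr \<open>*v\<close> 75) +
  fixes b :: "'v \<Rightarrow> 'v \<Rightarrow> 'k"
  assumes b_add: "b x (y + z) = b x y + b x z" and b_scale: "b x (a *v y) = a * b x y"
    and b_sym: "b x y = b y x"
begin

lemma b_add_left: "b (x + y) z = b x z + b y z"
proof -
  have "b (x + y) z = b z (x + y)" by (rule b_sym)
  also have "\<dots> = b z x + b z y" by (rule b_add)
  also have "\<dots> = b x z + b y z" using b_sym[of z x] b_sym[of z y] by simp
  finally show ?thesis .
qed
lemma b_scale_left: "b (a *v x) z = a * b x z"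
proof -
  have "b (a *v x) z = b z (a *v x)" by (rule b_sym)
  also have "\<dots> = a * b z x" by (rule b_scale)
  also have "\<dots> = a * b x z" using b_sym[of z x] by simp
  finally show ?thesis .
qed
lemma b_zero[simp]: "b x 0 = 0" "b 0 x = 0"
  using b_scale[of x 0 0] b_scale_left[of 0 0 x] by simp_all
lemma b_neg: "b x (- y) = - b x y" "b (- y) x = - b y x"
proof -
  have e: "- y = (-1) *v y" by simp
  have "b x (- y) = b x ((-1) *v y)" by (subst e) (rule refl)
  also have "\<dots> = (-1) * b x y" by (rule b_scale)
  finally show "b x (- y) = - b x y" by simp
  have "b (- y) x = b ((-1) *v y) x" by (subst e) (rule refl)
  also have "\<dots> = (-1) * b y x" by (rule b_scale_left)
  finally show "b (- y) x = - b y x" by simp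
qed
lemma b_diff: "b x (y - z) = b x y - b x z" "b (y - z) x = b y x - b z x"
proof -
  have "b x (y - z) = b x (y + - z)" by (simp only: diff_conv_add_uminus)
  also have "\<dots> = b x y + - b x z" by (simp only: b_add b_neg)
  finally show "b x (y - z) = b x y - b x z" by simp
  have "b (y - z) x = b (y + - z) x" by (simp only: diff_conv_add_uminus)
  also have "\<dots> = b y x + - b z x" by (simp only: b_add_left b_neg)
  finally show "b (y - z) x = b y x - b z x" by simp
qed

lemmas bsimps = b_add b_add_left b_scale b_scale_left b_diff b_neg

definition orthn :: "nat \<Rightarrow> (nat \<Rightarrow> 'v) \<Rightarrow> bool" where
  "orthn n e \<longleftrightarrow> (\<forall>i<n. \<forall>j<n. b (e i) (e j) = (if i = j then 1 else 0))"

lemma proj_orth: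
  assumes "orthn N e" "n \<le> N" "j < N"
  shows "b (e j) (proj scale b e n x) = (if j < n then 0 else b (e j) x)"
  using assms(2)
proof (induction n)
  case 0 then show ?case by simp
next
  case (Suc n)
  have IH: "b (e j) (proj scale b e n x) = (if j < n then 0 else b (e j) x)" using Suc by simp
  have o: "b (e j) (e n) = (if j = n then 1 else 0)" using assms Suc.prems unfolding orthn_def by auto
  have "b (e j) (proj scale b e (Suc n) x) = b (e j) (proj scale b e n x) - b (e n) x * b (e j) (e n)"
    by (simp add: b_diff b_scale)
  then show ?case using IH o by (cases "j = n") auto
qed

lemma proj_q:
  assumes "orthn N e" "n \<le> N"
  shows "b x x = b (proj scale b e n x) (proj scale b e n x) + (\<Sum>i<n. b (e i) x * b (e i) x)"
  using assms(2)
proof (induction n)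
  case 0 then show ?case by simp
next
  case (Suc n)
  let ?p = "proj scale b e n x" and ?t = "b (e n) x"
  have t: "b (e n) ?p = ?t" using proj_orth[OF assms(1), of n n x] Suc.prems by simp
  have t': "b ?p (e n) = ?t" using t b_sym[of ?p "e n"] by simp
  have o: "b (e n) (e n) = 1" using assms Suc.prems unfolding orthn_def by auto
  have "b (proj scale b e (Suc n) x) (proj scale b e (Suc n) x) = b ?p ?p - ?t * b (e n) ?p - ?t * (b ?p (e n) - ?t * b (e n) (e n))"
    by (simp only: proj.simps b_diff b_scale b_scale_left)
  also have "\<dots> = b ?p ?p - ?t * ?t - ?t * (?t - ?t * 1)" by (simp only: t t' o)
  also have "\<dots> = b ?p ?p - ?t * ?t" by simp
  finally have "b (proj scale b e (Suc n) x) (proj scale b e (Suc n) x) = b ?p ?p - ?t * ?t" .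
  then show ?case using Suc by simp
qed

lemma orthonormal_seq:
  assumes sq: "\<forall>a::'k. \<exists>r. r*r = a"
    and nd: "\<And>n e. orthn n e \<Longrightarrow> \<exists>x. (\<forall>i<n. b (e i) x = 0) \<and> b x x \<noteq> 0"
  shows "\<exists>e::nat \<Rightarrow> 'v. \<forall>i j. b (e i) (e j) = (if i = j then 1 else 0)"
proof -
  have "\<exists>e. \<forall>n. orthn n e"
  proof (rule build_seq)
    show "orthn 0 (\<lambda>_. 0)" by (simp add: orthn_def)
  next
    fix n e assume o: "orthn n e"
    obtain x where x: "\<forall>i<n. b (e i) x = 0" "b x x \<noteq> 0" using nd[OF o] by blast
    obtain r where r: "r * r = b x x" using sq by blast
    have r0: "r \<noteq> 0" using r x by auto
    define x' where "x' = (1/r) *v x"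
    have 1: "b x' x' = 1" using r r0 x(2) by (simp add: x'_def bsimps field_simps)
    have 21: "b (e i) x' = 0" if "i < n" for i
      using x that by (auto simp: x'_def bsimps)
    have 2: "b (e i) x' = 0" "b x' (e i) = 0" if "i < n" for i
      using 21[OF that] b_sym[of x' "e i"] by simp_all
    have "orthn (Suc n) (e(n:=x'))" unfolding orthn_def
    proof (intro allI impI)
      fix i j assume "i < Suc n" "j < Suc n"
      then show "b ((e(n:=x')) i) ((e(n:=x')) j) = (if i = j then 1 else 0)"
        using o 1 2 unfolding orthn_def by (cases "i = n"; cases "j = n") auto
    qed
    then show "\<exists>x. orthn (Suc n) (e(n:=x))" by blast
  next
    fix n f g assume "\<And>i. i < n \<Longrightarrow> f i = g i" "orthn n f"
    then show "orthn n g" by (simp add: orthn_def)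
  qed
  then obtain e where e: "\<forall>n. orthn n e" by blast
  have "\<forall>i j. b (e i) (e j) = (if i = j then 1 else 0)"
  proof (intro allI)
    fix i j show "b (e i) (e j) = (if i = j then 1 else 0)"
      using e[rule_format, of "Suc (max i j)"] by (simp add: orthn_def)
  qed
  then show ?thesis by blast
qed

lemma vs_self: "vector_space ((*) :: 'k \<Rightarrow> 'k \<Rightarrow> 'k)"
  unfolding vector_space_def by (simp add: algebra_simps)

lemma lin_b: "linear_form scale (b u)"
  unfolding linear_form_def Vector_Spaces.linear_iff
  using vs_self vector_space_axioms by (simp add: b_add b_scale)

lemma orth_strength:
  assumes o: "orthn n e" and z: "\<forall>x. (\<forall>i<n. b (e i) x = 0) \<longrightarrow> b x x = 0"
  shows "strength_le scale (\<lambda>x. b x x) n"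
  unfolding strength_le_def
proof (rule exI[of _ "\<lambda>i v. b (e i) v"], rule exI[of _ "\<lambda>i v. b (e i) v"], intro conjI allI impI)
  show "linear_form scale (\<lambda>v. b (e i) v)" "linear_form scale (\<lambda>v. b (e i) v)" for i
    using lin_b[of "e i"] by simp_all
  show "(\<lambda>x. b x x) = (\<lambda>v. \<Sum>i<n. b (e i) v * b (e i) v)"
  proof
    fix x
    have "b (proj scale b e n x) (proj scale b e n x) = 0"
      using z proj_orth[OF o, of n _ x] by simp
    then show "b x x = (\<Sum>i<n. b (e i) x * b (e i) x)" using proj_q[OF o, of n x] by simp
  qed
qed

lemma rows:
  fixes c :: "nat \<Rightarrow> nat \<Rightarrow> 'k" and e :: "nat \<Rightarrow> 'v"
  assumes sq: "\<forall>a::'k. \<exists>r. r*r = a"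
    and e: "\<And>i j. b (e i) (e j) = (if i = j then 1 else 0)"
    and csym: "\<And>i j. c i j = c j i"
  shows "\<exists>v. \<forall>i j. b (v i) (v j) = c i j"
proof -
  define G where "G n v \<longleftrightarrow> (\<forall>i<n. \<forall>j<n. b (v i) (v j) = c i j) \<and>
     (\<forall>i<n. \<forall>k. 2*i+2 \<le> k \<longrightarrow> b (v i) (e k) = 0) \<and>
     (\<forall>i<n. b (v i) (e (2*i)) \<noteq> 0 \<or> b (v i) (e (2*i+1)) \<noteq> 0)" for n v
  have inner: "\<exists>y. (\<forall>m<M. b (v m) y = c m n) \<and> (\<forall>k. 2*M \<le> k \<longrightarrow> b y (e k) = 0)"
    if G: "G n v" and Mn: "M \<le> n" for n v M
    using Mn
  proof (induction M)
    case 0 show ?case by (rule exI[of _ 0]) simp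
  next
    case (Suc M)
    then obtain y where y: "\<forall>m<M. b (v m) y = c m n" "\<forall>k. 2*M \<le> k \<longrightarrow> b y (e k) = 0" by auto
    have M: "M < n" using Suc by simp
    define p where "p = b (v M) (e (2*M))"
    define p' where "p' = b (v M) (e (2*M+1))"
    define r where "r = c M n - b (v M) y"
    have piv: "p \<noteq> 0 \<or> p' \<noteq> 0" using G M unfolding G_def p_def p'_def by auto
    obtain s t where st: "s * p + t * p' = r"
    proof (cases "p = 0")
      case True then have "p' \<noteq> 0" using piv by simp
      then show ?thesis using that[of 0 "r/p'"] by simp
    next
      case False then show ?thesis using that[of "r/p" 0] by simp
    qed
    define y' where "y' = y + s *v e (2*M) + t *v e (2*M+1)"
    have sup: "b (v m) (e k) = 0" if "m < n" "2*m+2 \<le> k" for m k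
      using G that unfolding G_def by blast
    show ?case
    proof (rule exI[of _ y'], intro conjI allI impI)
      fix m assume "m < Suc M"
      then consider "m < M" | "m = M" by linarith
      then show "b (v m) y' = c m n"
      proof cases
        case 1
        then have "b (v m) (e (2*M)) = 0" "b (v m) (e (2*M+1)) = 0" using sup M by auto
        then show ?thesis using y 1 by (simp add: y'_def bsimps)
      next
        case 2
        have "b (v M) y' = b (v M) y + (s * p + t * p')"
          by (simp add: y'_def b_add b_scale p_def p'_def add.assoc)
        then show ?thesis using st 2 by (simp add: r_def)
      qed
    next
      fix k assume "2 * Suc M \<le> k"
      then show "b y' (e k) = 0" using y e by (simp add: y'_def bsimps)
    qed
  qed
  have step: "\<exists>x. G (Suc n) (v(n:=x))" if G: "G n v" for n v
  proof -
    obtain y where y: "\<forall>m<n. b (v m) y = c m n" "\<forall>k. 2*n \<le> k \<longrightarrow> b y (e k) = 0"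
      using inner[OF G, of n] by blast
    define d where "d = c n n - b y y"
    obtain s t where st: "s*s + t*t = d" "s \<noteq> 0 \<or> t \<noteq> 0"
    proof (cases "d = 0")
      case True
      obtain i where "i*i = (-1::'k)" using sq by blast
      then show ?thesis using that[of 1 i] True by simp
    next
      case False
      obtain r where "r*r = d" using sq by blast
      then show ?thesis using that[of r 0] False by auto
    qed
    define x where "x = y + s *v e (2*n) + t *v e (2*n+1)"
    have y0: "b y (e (2*n)) = 0" "b y (e (2*n+1)) = 0" using y(2) by auto
    have y0': "b (e (2*n)) y = 0" "b (e (2*n+1)) y = 0"
      using y0 b_sym[of y "e (2*n)"] b_sym[of y "e (2*n+1)"] by simp_all
    have sup: "b (v m) (e k) = 0" if "m < n" "2*m+2 \<le> k" for m k
      using G that unfolding G_def by blast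
    have hx1: "b (v m) x = c m n" if "m < n" for m
    proof -
      have "b (v m) (e (2*n)) = 0" "b (v m) (e (2*n+1)) = 0" using sup that by auto
      then show ?thesis using y that by (simp add: x_def bsimps)
    qed
    have hx1': "b x (v m) = c n m" if "m < n" for m
      using hx1[OF that] b_sym[of x "v m"] csym[of m n] by simp
    have hx2: "b x (e k) = 0" if "2*n+2 \<le> k" for k
      using y that e by (simp add: x_def bsimps)
    have hx3: "b x (e (2*n)) = s" "b x (e (2*n+1)) = t"
      using y0 e by (simp_all add: x_def bsimps)
    have "b x x = b y y + (s*s + t*t)"
      using y0 y0' e by (simp add: x_def b_add b_add_left b_scale b_scale_left ac_simps)
    then have hx4: "b x x = c n n"
      using st by (simp add: d_def)
    show ?thesis
    proof (rule exI[of _ x], unfold G_def, intro conjI allI impI)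
      fix i j assume "i < Suc n" "j < Suc n"
      then show "b ((v(n:=x)) i) ((v(n:=x)) j) = c i j"
        using G hx1 hx1' hx4 unfolding G_def by (cases "i = n"; cases "j = n") auto
    next
      fix i k assume "i < Suc n" "2*i+2 \<le> k"
      then show "b ((v(n:=x)) i) (e k) = 0"
        using G hx2 unfolding G_def by (cases "i = n") auto
    next
      fix i assume "i < Suc n"
      then show "b ((v(n:=x)) i) (e (2*i)) \<noteq> 0 \<or> b ((v(n:=x)) i) (e (2*i+1)) \<noteq> 0"
        using G hx3 st(2) unfolding G_def by (cases "i = n") auto
    qed
  qed
  have "\<exists>v. \<forall>n. G n v"
  proof (rule build_seq)
    show "G 0 (\<lambda>_. 0)" by (simp add: G_def)
  next
    fix n v assume "G n v" then show "\<exists>x. G (Suc n) (v(n:=x))" by (rule step)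
  next
    fix n f g assume "\<And>i. i < n \<Longrightarrow> f i = g i" "G n f"
    then show "G n g" unfolding G_def by simp
  qed
  then obtain v where v: "\<forall>n. G n v" by blast
  have "\<forall>i j. b (v i) (v j) = c i j"
  proof (intro allI)
    fix i j show "b (v i) (v j) = c i j"
      using v[rule_format, of "Suc (max i j)"] by (simp add: G_def)
  qed
  then show ?thesis by blast
qed

end

lemma P2_sbf:
  fixes scale :: "'k::field \<Rightarrow> 'v::ab_group_add \<Rightarrow> 'v"
  assumes "quadratic_space scale q" "(2::'k) \<noteq> 0"
  shows "\<exists>b. sbf scale b \<and> (\<forall>x. q x = b x x)"
proof -
  have vs: "vector_space scale" using assms(1) by (simp add: quadratic_space_def)
  obtain B :: "'v \<Rightarrow> 'v \<Rightarrow> 'k" where l1: "\<forall>w. linear_form scale (\<lambda>v. B v w)"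
    and l2: "\<forall>v. linear_form scale (B v)" and qB: "\<forall>v. q v = B v v"
    using assms(1) unfolding quadratic_space_def is_P2_def by blast
  have a1: "B (x + y) w = B x w + B y w" "B (scale c x) w = c * B x w" for x y w c
    using l1[rule_format, of w] unfolding linear_form_def Vector_Spaces.linear_iff by auto
  have a2: "B w (x + y) = B w x + B w y" "B w (scale c x) = c * B w x" for x y w c
    using l2[rule_format, of w] unfolding linear_form_def Vector_Spaces.linear_iff by auto
  define b where "b x y = (B x y + B y x) / 2" for x y
  have "sbf scale b"
    unfolding sbf_def sbf_axioms_def
    using vs by (simp add: b_def a1 a2 add_divide_distrib algebra_simps)
  moreover have "q x = b x x" for x
    using assms(2) qB by (simp add: b_def field_simps)
  ultimately show ?thesis by blast
qed

lemma alg_closed_sqrt: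
  assumes "alg_closed TYPE('k::field)"
  shows "\<forall>a::'k. \<exists>r. r*r = a"
proof
  fix a :: 'k
  have "degree [:-a, 0, 1:] > 0" by simp
  then obtain r where "poly [:-a, 0, 1:] r = 0" using assms unfolding alg_closed_def by blast
  then have "r*r = a" by (simp add: algebra_simps)
  then show "\<exists>r. r*r = a" by blast
qed


theorem proposition2p4:
  fixes scaleV :: "'k::field \<Rightarrow> 'v::ab_group_add \<Rightarrow> 'v" and q :: "'v \<Rightarrow> 'k"
    and scaleW :: "'k \<Rightarrow> 'w::ab_group_add \<Rightarrow> 'w" and q' :: "'w \<Rightarrow> 'k"
  assumes "alg_closed TYPE('k)"
    and "(2::'k) \<noteq> 0"
    and "quadratic_space scaleV q" and "nondegenerate scaleV q"
    and "quadratic_space scaleW q'" and "dim_le_aleph0 scaleW"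
  shows "\<exists>\<phi>. Vector_Spaces.linear scaleW scaleV \<phi> \<and> q \<circ> \<phi> = q'"
proof -
  have sq: "\<forall>a::'k. \<exists>r. r*r = a" by (rule alg_closed_sqrt[OF assms(1)])
  obtain bV where sV: "sbf scaleV bV" and qV: "\<forall>x. q x = bV x x"
    using P2_sbf[OF assms(3,2)] by blast
  obtain bW where sW: "sbf scaleW bW" and qW: "\<forall>x. q' x = bW x x"
    using P2_sbf[OF assms(5,2)] by blast
  interpret V: sbf scaleV bV by (rule sV)
  interpret W: sbf scaleW bW by (rule sW)
  interpret P: vector_space_pair scaleW scaleV by unfold_locales
  have qfun: "q = (\<lambda>x. bV x x)" using qV by auto
  have nsl: "\<not> strength_le scaleV q s" for s
    using assms(4) unfolding nondegenerate_def strength_def by (auto split: if_splits)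
  have nd: "\<exists>x. (\<forall>i<n. bV (e i) x = 0) \<and> bV x x \<noteq> 0" if "V.orthn n e" for n e
    using V.orth_strength[OF that] nsl[of n] qfun by auto
  have "\<exists>e::nat \<Rightarrow> 'v. \<forall>i j. bV (e i) (e j) = (if i = j then 1 else 0)"
    by (rule V.orthonormal_seq[OF sq], rule nd, assumption)
  then obtain e :: "nat \<Rightarrow> 'v" where e: "\<And>i j. bV (e i) (e j) = (if i = j then 1 else 0)" by blast
  obtain Bw where Bc: "countable Bw" and Bi: "\<not> W.dependent Bw" and Bs: "W.span Bw = UNIV"
    using assms(6) unfolding dim_le_aleph0_def by blast
  define c where "c i j = bW (from_nat_into Bw i) (from_nat_into Bw j)" for i j
  have csym: "c i j = c j i" for i j unfolding c_def by (rule W.b_sym)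
  have "\<exists>v. \<forall>i j. bV (v i) (v j) = c i j"
    by (rule V.rows[OF sq e csym])
  then obtain v where v: "\<And>i j. bV (v i) (v j) = c i j" by blast
  define \<psi> where "\<psi> u = v (to_nat_on Bw u)" for u
  define \<phi> where "\<phi> = P.construct Bw \<psi>"
  have lin: "Vector_Spaces.linear scaleW scaleV \<phi>"
    unfolding \<phi>_def by (rule P.linear_construct[OF Bi])
  have \<phi>add: "\<phi> (x + y) = \<phi> x + \<phi> y" and \<phi>sc: "\<phi> (scaleW a x) = scaleV a (\<phi> x)" for x y a
    using lin unfolding Vector_Spaces.linear_iff by auto
  have \<phi>0: "\<phi> 0 = 0" using \<phi>sc[of 0 0] by simp
  have \<phi>B: "\<phi> u = \<psi> u" if "u \<in> Bw" for u
    unfolding \<phi>_def by (rule P.construct_basis[OF Bi that])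
  have pair: "bV (\<phi> u) (\<phi> u') = bW u u'" if "u \<in> Bw" "u' \<in> Bw" for u u'
    using that Bc by (simp add: \<phi>B \<psi>_def v c_def)
  have stepa: "bV (\<phi> w) (\<phi> u) = bW w u" if u: "u \<in> Bw" for w u
  proof -
    have "w \<in> W.span Bw" using Bs by simp
    then show ?thesis
    proof (induction rule: W.span_induct_alt)
      case base then show ?case by (simp add: \<phi>0)
    next
      case (step a x y)
      then show ?case using pair[OF step(1) u] by (simp add: \<phi>add \<phi>sc V.bsimps W.bsimps)
    qed
  qed
  have key: "bV (\<phi> w) (\<phi> w2) = bW w w2" for w w2
  proof -
    have "w2 \<in> W.span Bw" using Bs by simp
    then show ?thesis
    proof (induction rule: W.span_induct_alt)
      case base then show ?case by (simp add: \<phi>0)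
    next
      case (step a x y)
      have "bV (\<phi> w) (\<phi> x) = bW w x" using stepa[OF step(1), of w] by simp
      then show ?case using step(2) by (simp add: \<phi>add \<phi>sc V.bsimps W.bsimps)
    qed
  qed
  show ?thesis
  proof (rule exI[of _ \<phi>], intro conjI)
    show "Vector_Spaces.linear scaleW scaleV \<phi>" by (rule lin)
    show "q \<circ> \<phi> = q'" using key qV qW by auto
  qed
qed

end
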